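(* For all $t\in\mathbb R$ and all $0<z\le\varepsilon\le\infty$, $$\sum_{k=1}^n|f_k(t)-1|^2\le t^4\Big[\frac z2\sup_{0<x\le\varepsilon}xL_n(x)+\frac14\sum_{k=1}^n\sigma_k^2\sigma_k^2(z)\Big]\le t^4\Big[\frac z2\sup_{0<x\le\varepsilon}xL_n(x)+\frac{\alpha(\varepsilon)}{4z}\sup_{0<x\le\varepsilon}\big(xL_n(x)\big)^{5/3}\Big].$$
   Context: $X_1,\dots,X_n$ are independent real random variables with $\mathbb E X_k=0$, $\sigma_k^2=\mathbb E X_k^2<\infty$, normalized so that $\sum_k\sigma_k^2=1$; $f_k(t)=\mathbb E e^{itX_k}$; $\sigma_k^2(z)=\mathbb E X_k^2\mathbf 1(|X_k|\ge z)$ and $L_n(z)=\sum_k\sigma_k^2(z)$ for $z\ge0$. For $\varepsilon\in(0,\infty]$, $\alpha(\varepsilon)=\inf_{0<x<\min\{\varepsilon,1\}}(x-x^3)^{-2/3}$, i.e. $(\varepsilon-\varepsilon^3)^{-2/3}$ if $\varepsilon\le3^{-1/2}$ and $3\cdot2^{-2/3}$ otherwise. *)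

theory Defs
  imports "HOL-Probability.Probability"
begin

definition alpha :: "ereal \<Rightarrow> real" where
  "alpha \<epsilon> = Inf {(x - x ^ 3) powr (-(2/3)) | x::real. 0 < x \<and> ereal x < \<epsilon> \<and> x < 1}"

end

theory Submission
  imports Defs
begin


lemma (in prob_space) char_sq_bound:
  assumes Xm[measurable]: "X \<in> borel_measurable M" and i1: "integrable M X"
    and i2: "integrable M (\<lambda>\<omega>. (X \<omega>)\<^sup>2)" and e0: "expectation X = 0"
  shows "cmod (char (distr M borel X) t - 1) \<le> t\<^sup>2 / 2 * expectation (\<lambda>\<omega>. (X \<omega>)\<^sup>2)"
proof -
  have ch: "char (distr M borel X) t = (CLINT \<omega>|M. iexp (t * X \<omega>))"
    unfolding char_def by (simp add: integral_distr)
  have integ: "integrable M (\<lambda>\<omega>. iexp (t * X \<omega>))"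
    by (intro integrable_const_bound[of _ 1]) auto
  have integ2: "integrable M (\<lambda>\<omega>. 1 + \<i> * complex_of_real (t * X \<omega>))"
    using i1 by (intro Bochner_Integration.integrable_add integrable_mult_right integrable_of_real) auto
  have "(CLINT \<omega>|M. iexp (t * X \<omega>) - (1 + \<i> * complex_of_real (t * X \<omega>)))
      = (CLINT \<omega>|M. iexp (t * X \<omega>)) - 1"
    using integ integ2 i1 e0
    by (simp add: Bochner_Integration.integral_diff Bochner_Integration.integral_add
        integral_mult_right_zero prob_space)
  then have "cmod (char (distr M borel X) t - 1)
      = cmod (CLINT \<omega>|M. iexp (t * X \<omega>) - (1 + \<i> * complex_of_real (t * X \<omega>)))"
    using ch by simp
  also have "\<dots> \<le> expectation (\<lambda>\<omega>. cmod (iexp (t * X \<omega>) - (1 + \<i> * complex_of_real (t * X \<omega>))))"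
    by (rule integral_norm_bound)
  also have "\<dots> \<le> expectation (\<lambda>\<omega>. t\<^sup>2 / 2 * (X \<omega>)\<^sup>2)"
  proof (rule integral_mono)
    show "integrable M (\<lambda>\<omega>. cmod (iexp (t * X \<omega>) - (1 + \<i> * complex_of_real (t * X \<omega>))))"
      by (intro integrable_norm Bochner_Integration.integrable_diff integ integ2)
    show "integrable M (\<lambda>\<omega>. t\<^sup>2 / 2 * (X \<omega>)\<^sup>2)"
      using i2 by (intro integrable_mult_right)
    fix \<omega>
    have "cmod (iexp (t * X \<omega>) - (\<Sum>k \<le> 1. (\<i> * (t * X \<omega>))^k / fact k)) \<le> \<bar>t * X \<omega>\<bar>^2 / fact 2"
      using iexp_approx1[of "t * X \<omega>" 1] by (simp add: numeral_2_eq_2)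
    then show "cmod (iexp (t * X \<omega>) - (1 + \<i> * complex_of_real (t * X \<omega>))) \<le> t\<^sup>2 / 2 * (X \<omega>)\<^sup>2"
      by (simp add: power_mult_distrib field_simps)
  qed
  also have "\<dots> = t\<^sup>2 / 2 * expectation (\<lambda>\<omega>. (X \<omega>)\<^sup>2)" by simp
  finally show ?thesis .
qed



lemma (in prob_space) integrable_sq_ind:
  fixes X :: "'a \<Rightarrow> real"
  assumes Xm[measurable]: "X \<in> borel_measurable M" and i2: "integrable M (\<lambda>\<omega>. (X \<omega>)\<^sup>2)"
    and Qm[measurable]: "Measurable.pred M Q"
  shows "integrable M (\<lambda>\<omega>. (X \<omega>)\<^sup>2 * indicator {\<omega>. Q \<omega>} \<omega>)"
proof (rule Bochner_Integration.integrable_bound[where f="\<lambda>\<omega>. (X \<omega>)\<^sup>2"])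
  show "integrable M (\<lambda>\<omega>. (X \<omega>)\<^sup>2)" by (rule i2)
  have "(\<lambda>\<omega>. (X \<omega>)\<^sup>2 * indicator {\<omega>. Q \<omega>} \<omega>) = (\<lambda>\<omega>. if Q \<omega> then (X \<omega>)\<^sup>2 else 0)"
    by (auto simp: indicator_def)
  then show "(\<lambda>\<omega>. (X \<omega>)\<^sup>2 * indicator {\<omega>. Q \<omega>} \<omega>) \<in> borel_measurable M" by simp
  show "AE x in M. norm ((X x)\<^sup>2 * indicator {\<omega>. Q \<omega>} x) \<le> norm ((X x)\<^sup>2)"
    by (auto simp: indicator_def)
qed

lemma (in prob_space) sq_split:
  fixes X :: "'a \<Rightarrow> real"
  assumes Xm[measurable]: "X \<in> borel_measurable M" and i2: "integrable M (\<lambda>\<omega>. (X \<omega>)\<^sup>2)"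
  shows "expectation (\<lambda>\<omega>. (X \<omega>)\<^sup>2) = expectation (\<lambda>\<omega>. (X \<omega>)\<^sup>2 * indicator {\<omega>. \<bar>X \<omega>\<bar> < y} \<omega>)
     + expectation (\<lambda>\<omega>. (X \<omega>)\<^sup>2 * indicator {\<omega>. \<bar>X \<omega>\<bar> \<ge> y} \<omega>)"
proof -
  have "(\<lambda>\<omega>. (X \<omega>)\<^sup>2) = (\<lambda>\<omega>. (X \<omega>)\<^sup>2 * indicator {\<omega>. \<bar>X \<omega>\<bar> < y} \<omega>
     + (X \<omega>)\<^sup>2 * indicator {\<omega>. \<bar>X \<omega>\<bar> \<ge> y} \<omega>)"
  proof
    fix \<omega> show "(X \<omega>)\<^sup>2 = (X \<omega>)\<^sup>2 * indicator {\<omega>. \<bar>X \<omega>\<bar> < y} \<omega>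
     + (X \<omega>)\<^sup>2 * indicator {\<omega>. \<bar>X \<omega>\<bar> \<ge> y} \<omega>"
      by (cases "\<bar>X \<omega>\<bar> < y") (auto simp: indicator_def)
  qed
  then show ?thesis
    by (simp add: Bochner_Integration.integral_add integrable_sq_ind[OF Xm i2])
qed

lemma (in prob_space) B1:
  fixes X :: "'a \<Rightarrow> real"
  assumes Xm[measurable]: "X \<in> borel_measurable M" and i2: "integrable M (\<lambda>\<omega>. (X \<omega>)\<^sup>2)"
    and y: "0 \<le> y"
  shows "expectation (\<lambda>\<omega>. (X \<omega>)\<^sup>2) * prob {\<omega>\<in>space M. y \<le> \<bar>X \<omega>\<bar>}
     \<le> expectation (\<lambda>\<omega>. (X \<omega>)\<^sup>2 * indicator {\<omega>. \<bar>X \<omega>\<bar> \<ge> y} \<omega>)"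
proof -
  define P where "P = prob {\<omega>\<in>space M. y \<le> \<bar>X \<omega>\<bar>}"
  define E1 where "E1 = expectation (\<lambda>\<omega>. (X \<omega>)\<^sup>2 * indicator {\<omega>. \<bar>X \<omega>\<bar> < y} \<omega>)"
  define E2 where "E2 = expectation (\<lambda>\<omega>. (X \<omega>)\<^sup>2 * indicator {\<omega>. \<bar>X \<omega>\<bar> \<ge> y} \<omega>)"
  have sp: "expectation (\<lambda>\<omega>. (X \<omega>)\<^sup>2) = E1 + E2"
    unfolding E1_def E2_def by (rule sq_split[OF Xm i2])
  have P01: "0 \<le> P" "P \<le> 1" unfolding P_def by auto
  have c: "prob {\<omega>\<in>space M. \<bar>X \<omega>\<bar> < y} = 1 - P"
  proof -
    have "{\<omega>\<in>space M. \<bar>X \<omega>\<bar> < y} = space M - {\<omega>\<in>space M. y \<le> \<bar>X \<omega>\<bar>}" by auto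
    then show ?thesis unfolding P_def by (simp add: prob_compl)
  qed
  have E1b: "E1 \<le> y\<^sup>2 * (1 - P)"
  proof -
    have "E1 \<le> expectation (\<lambda>\<omega>. y\<^sup>2 * indicator {\<omega>\<in>space M. \<bar>X \<omega>\<bar> < y} \<omega>)"
      unfolding E1_def
    proof (rule integral_mono)
      show "integrable M (\<lambda>\<omega>. (X \<omega>)\<^sup>2 * indicator {\<omega>. \<bar>X \<omega>\<bar> < y} \<omega>)"
        by (rule integrable_sq_ind[OF Xm i2]) simp
      show "integrable M (\<lambda>\<omega>. y\<^sup>2 * indicator {\<omega>\<in>space M. \<bar>X \<omega>\<bar> < y} \<omega>)"
        apply (intro integrable_mult_right integrable_real_indicator, simp)
        using emeasure_finite by (simp add: less_top[symmetric])
      fix \<omega> assume "\<omega> \<in> space M"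
      then show "(X \<omega>)\<^sup>2 * indicator {\<omega>. \<bar>X \<omega>\<bar> < y} \<omega> \<le> y\<^sup>2 * indicator {\<omega>\<in>space M. \<bar>X \<omega>\<bar> < y} \<omega>"
        using y by (auto simp: indicator_def power2_le_iff_abs_le)
    qed
    also have "\<dots> = y\<^sup>2 * prob {\<omega>\<in>space M. \<bar>X \<omega>\<bar> < y}" by simp
    also have "\<dots> = y\<^sup>2 * (1 - P)" using c by simp
    finally show ?thesis .
  qed
  have E2b: "y\<^sup>2 * P \<le> E2"
  proof -
    have "y\<^sup>2 * P = expectation (\<lambda>\<omega>. y\<^sup>2 * indicator {\<omega>\<in>space M. y \<le> \<bar>X \<omega>\<bar>} \<omega>)"
      unfolding P_def by simp
    also have "\<dots> \<le> E2"
      unfolding E2_def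
    proof (rule integral_mono)
      show "integrable M (\<lambda>\<omega>. (X \<omega>)\<^sup>2 * indicator {\<omega>. y \<le> \<bar>X \<omega>\<bar>} \<omega>)"
        by (rule integrable_sq_ind[OF Xm i2]) simp
      show "integrable M (\<lambda>\<omega>. y\<^sup>2 * indicator {\<omega>\<in>space M. y \<le> \<bar>X \<omega>\<bar>} \<omega>)"
        apply (intro integrable_mult_right integrable_real_indicator, simp)
        using emeasure_finite by (simp add: less_top[symmetric])
      fix \<omega> assume "\<omega> \<in> space M"
      then show "y\<^sup>2 * indicator {\<omega>\<in>space M. y \<le> \<bar>X \<omega>\<bar>} \<omega> \<le> (X \<omega>)\<^sup>2 * indicator {\<omega>. y \<le> \<bar>X \<omega>\<bar>} \<omega>"
        using y by (auto simp: indicator_def abs_le_square_iff[symmetric])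
    qed
    finally show ?thesis .
  qed
  have "(E1 + E2) * P \<le> y\<^sup>2 * (1 - P) * P + E2 * P"
    using E1b P01 by (simp add: distrib_right mult_right_mono)
  also have "\<dots> \<le> E2 * (1 - P) + E2 * P"
  proof (intro add_right_mono)
    have "y\<^sup>2 * P * (1 - P) \<le> E2 * (1 - P)" using E2b P01 by (intro mult_right_mono) auto
    then show "y\<^sup>2 * (1 - P) * P \<le> E2 * (1 - P)" by (simp add: algebra_simps)
  qed
  also have "\<dots> = E2" by (simp add: algebra_simps)
  finally show ?thesis using sp unfolding P_def E2_def by simp
qed

lemma int_2y: assumes "0 \<le> c"
  shows "(\<integral>\<^sup>+y. ennreal (2*y) * indicator {0..c} y \<partial>lborel) = ennreal (c\<^sup>2)"
proof -
  have "((\<lambda>y. 2*y) has_integral (c\<^sup>2 - 0\<^sup>2)) {0..c}"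
    using assms
    by (intro fundamental_theorem_of_calculus)
       (auto intro!: derivative_eq_intros simp: has_real_derivative_iff_has_vector_derivative[symmetric])
  then show ?thesis
    by (subst nn_integral_has_integral_lebesgue') auto
qed

lemma (in prob_space) B2:
  fixes X :: "'a \<Rightarrow> real"
  assumes Xm[measurable]: "X \<in> borel_measurable M" and z: "0 \<le> z"
  shows "(\<integral>\<^sup>+\<omega>. ennreal (min ((X \<omega>)\<^sup>2) (z\<^sup>2)) \<partial>M)
     = (\<integral>\<^sup>+y. ennreal (2*y) * indicator {0..z} y * emeasure M {\<omega>\<in>space M. y \<le> \<bar>X \<omega>\<bar>} \<partial>lborel)"
proof -
  interpret P: pair_sigma_finite M lborel
    by (intro pair_sigma_finite.intro sigma_finite_lborel) unfold_locales
  have key: "(\<integral>\<^sup>+y. ennreal (2*y) * indicator {0..z} y * indicator {..u} y \<partial>lborel) = ennreal (min (u\<^sup>2) (z\<^sup>2))"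
    if u: "0 \<le> u" for u :: real
  proof -
    have "(\<lambda>y. ennreal (2*y) * indicator {0..z} y * indicator {..u} y) = (\<lambda>y. ennreal (2*y) * indicator {0..min u z} y)"
      by (auto simp: indicator_def fun_eq_iff)
    moreover have "min (u\<^sup>2) (z\<^sup>2) = (min u z)\<^sup>2"
      using u z by (auto simp: min_def power_mono)
    ultimately show ?thesis using int_2y[of "min u z"] u z by simp
  qed
  have "(\<integral>\<^sup>+\<omega>. ennreal (min ((X \<omega>)\<^sup>2) (z\<^sup>2)) \<partial>M)
     = (\<integral>\<^sup>+\<omega>. (\<integral>\<^sup>+y. ennreal (2*y) * indicator {0..z} y * indicator {..\<bar>X \<omega>\<bar>} y \<partial>lborel) \<partial>M)"
    by (intro nn_integral_cong) (simp add: key)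
  also have "\<dots> = (\<integral>\<^sup>+y. (\<integral>\<^sup>+\<omega>. ennreal (2*y) * indicator {0..z} y * indicator {..\<bar>X \<omega>\<bar>} y \<partial>M) \<partial>lborel)"
  proof (rule P.Fubini'[symmetric])
    have "case_prod (\<lambda>\<omega> y. ennreal (2*y) * indicator {0..z} y * indicator {..\<bar>X \<omega>\<bar>} y)
        = (\<lambda>p. ennreal (2 * snd p) * indicator {0..z} (snd p) * (if snd p \<le> \<bar>X (fst p)\<bar> then 1 else 0))"
      by (auto simp: fun_eq_iff indicator_def)
    also have "\<dots> \<in> borel_measurable (M \<Otimes>\<^sub>M lborel)" by measurable
    finally show "case_prod (\<lambda>\<omega> y. ennreal (2*y) * indicator {0..z} y * indicator {..\<bar>X \<omega>\<bar>} y) \<in> borel_measurable (M \<Otimes>\<^sub>M lborel)" .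
  qed
  also have "\<dots> = (\<integral>\<^sup>+y. ennreal (2*y) * indicator {0..z} y * emeasure M {\<omega>\<in>space M. y \<le> \<bar>X \<omega>\<bar>} \<partial>lborel)"
  proof (intro nn_integral_cong)
    fix y :: real
    have "(\<integral>\<^sup>+\<omega>. ennreal (2*y) * indicator {0..z} y * indicator {..\<bar>X \<omega>\<bar>} y \<partial>M)
       = (\<integral>\<^sup>+\<omega>. ennreal (2*y) * indicator {0..z} y * indicator {\<omega>\<in>space M. y \<le> \<bar>X \<omega>\<bar>} \<omega> \<partial>M)"
      by (intro nn_integral_cong) (auto simp: indicator_def)
    also have "\<dots> = ennreal (2*y) * indicator {0..z} y * emeasure M {\<omega>\<in>space M. y \<le> \<bar>X \<omega>\<bar>}"
      by (subst nn_integral_cmult) auto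
    finally show "(\<integral>\<^sup>+\<omega>. ennreal (2*y) * indicator {0..z} y * indicator {..\<bar>X \<omega>\<bar>} y \<partial>M)
       = ennreal (2*y) * indicator {0..z} y * emeasure M {\<omega>\<in>space M. y \<le> \<bar>X \<omega>\<bar>}" .
  qed
  finally show ?thesis .
qed


lemma (in prob_space) Pmeas:
  fixes X :: "'a \<Rightarrow> real"
  assumes Xm[measurable]: "X \<in> borel_measurable M"
  shows "(\<lambda>y. emeasure M {\<omega>\<in>space M. y \<le> \<bar>X \<omega>\<bar>}) \<in> borel_measurable lborel"
  by measurable

lemma (in prob_space) sum_bound:
  fixes X :: "nat \<Rightarrow> 'a \<Rightarrow> real" and K :: "nat set"
  assumes fin: "finite K" and Xm: "\<And>k. k\<in>K \<Longrightarrow> X k \<in> borel_measurable M"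
    and i2: "\<And>k. k\<in>K \<Longrightarrow> integrable M (\<lambda>\<omega>. (X k \<omega>)\<^sup>2)"
    and z: "0 < z"
    and s: "\<And>y. 0 < y \<Longrightarrow> y \<le> z \<Longrightarrow>
       y * (\<Sum>k\<in>K. expectation (\<lambda>\<omega>. (X k \<omega>)\<^sup>2 * indicator {\<omega>. \<bar>X k \<omega>\<bar> \<ge> y} \<omega>)) \<le> s"
  shows "(\<Sum>k\<in>K. expectation (\<lambda>\<omega>. (X k \<omega>)\<^sup>2) *
            expectation (\<lambda>\<omega>. (X k \<omega>)\<^sup>2 * indicator {\<omega>. \<bar>X k \<omega>\<bar> < z} \<omega>)) \<le> 2 * z * s"
proof -
  define \<sigma> where "\<sigma> k = expectation (\<lambda>\<omega>. (X k \<omega>)\<^sup>2)" for k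
  define a where "a k = expectation (\<lambda>\<omega>. (X k \<omega>)\<^sup>2 * indicator {\<omega>. \<bar>X k \<omega>\<bar> < z} \<omega>)" for k
  define P where "P k y = prob {\<omega>\<in>space M. y \<le> \<bar>X k \<omega>\<bar>}" for k y
  define g where "g y = ennreal (2*y) * indicator {0..z} y" for y :: real
  have gm: "g \<in> borel_measurable lborel" unfolding g_def by measurable
  have \<sigma>0: "0 \<le> \<sigma> k" for k unfolding \<sigma>_def by simp
  have a0: "0 \<le> a k" for k unfolding a_def by simp
  have P0: "0 \<le> P k y" for k y unfolding P_def by simp
  have s0: "0 \<le> s"
  proof -
    have "0 \<le> z * (\<Sum>k\<in>K. expectation (\<lambda>\<omega>. (X k \<omega>)\<^sup>2 * indicator {\<omega>. \<bar>X k \<omega>\<bar> \<ge> z} \<omega>))"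
      using z by (intro mult_nonneg_nonneg sum_nonneg) auto
    then show ?thesis using s[of z] z by simp
  qed
  have pk: "ennreal (\<sigma> k * a k) \<le> (\<integral>\<^sup>+y. g y * ennreal (\<sigma> k * P k y) \<partial>lborel)" if k: "k \<in> K" for k
  proof -
    note [measurable] = Xm[OF k]
    define m where "m = expectation (\<lambda>\<omega>. min ((X k \<omega>)\<^sup>2) (z\<^sup>2))"
    have im: "integrable M (\<lambda>\<omega>. min ((X k \<omega>)\<^sup>2) (z\<^sup>2))"
      by (rule Bochner_Integration.integrable_bound[OF i2[OF k]]) auto
    have am: "a k \<le> m" unfolding a_def m_def
    proof (rule integral_mono[OF _ im])
      show "integrable M (\<lambda>\<omega>. (X k \<omega>)\<^sup>2 * indicator {\<omega>. \<bar>X k \<omega>\<bar> < z} \<omega>)"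
        by (rule integrable_sq_ind[OF Xm[OF k] i2[OF k]]) simp
      fix \<omega> show "(X k \<omega>)\<^sup>2 * indicator {\<omega>. \<bar>X k \<omega>\<bar> < z} \<omega> \<le> min ((X k \<omega>)\<^sup>2) (z\<^sup>2)"
        using z by (auto simp: indicator_def power2_le_iff_abs_le)
    qed
    have "ennreal m = (\<integral>\<^sup>+\<omega>. ennreal (min ((X k \<omega>)\<^sup>2) (z\<^sup>2)) \<partial>M)"
      unfolding m_def by (rule nn_integral_eq_integral[OF im, symmetric]) auto
    also have "\<dots> = (\<integral>\<^sup>+y. g y * emeasure M {\<omega>\<in>space M. y \<le> \<bar>X k \<omega>\<bar>} \<partial>lborel)"
      unfolding g_def by (rule B2[OF Xm[OF k]]) (use z in simp)
    finally have mi: "ennreal m = (\<integral>\<^sup>+y. g y * emeasure M {\<omega>\<in>space M. y \<le> \<bar>X k \<omega>\<bar>} \<partial>lborel)" .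
    have "ennreal (\<sigma> k * a k) \<le> ennreal (\<sigma> k * m)"
      using am \<sigma>0[of k] a0[of k] by (simp add: mult_left_mono)
    also have "\<dots> = ennreal (\<sigma> k) * ennreal m" using \<sigma>0[of k] by (intro ennreal_mult) (auto simp: m_def)
    also have "\<dots> = (\<integral>\<^sup>+y. ennreal (\<sigma> k) * (g y * emeasure M {\<omega>\<in>space M. y \<le> \<bar>X k \<omega>\<bar>}) \<partial>lborel)"
      unfolding mi using gm Pmeas[OF Xm[OF k]] by (subst nn_integral_cmult) auto
    also have "\<dots> = (\<integral>\<^sup>+y. g y * ennreal (\<sigma> k * P k y) \<partial>lborel)"
      by (intro nn_integral_cong)
         (simp add: P_def emeasure_eq_measure ennreal_mult \<sigma>0 mult.commute mult.left_commute)
    finally show ?thesis .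
  qed
  have "ennreal (\<Sum>k\<in>K. \<sigma> k * a k) = (\<Sum>k\<in>K. ennreal (\<sigma> k * a k))"
    using \<sigma>0 a0 by (simp add: sum_ennreal)
  also have "\<dots> \<le> (\<Sum>k\<in>K. (\<integral>\<^sup>+y. g y * ennreal (\<sigma> k * P k y) \<partial>lborel))"
    using pk by (rule sum_mono)
  also have "\<dots> = (\<integral>\<^sup>+y. (\<Sum>k\<in>K. g y * ennreal (\<sigma> k * P k y)) \<partial>lborel)"
  proof (rule nn_integral_sum[symmetric])
    fix k assume k: "k \<in> K"
    have "(\<lambda>y. ennreal (\<sigma> k) * (g y * emeasure M {\<omega>\<in>space M. y \<le> \<bar>X k \<omega>\<bar>})) \<in> borel_measurable lborel"
      using gm Pmeas[OF Xm[OF k]] by measurable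
    also have "(\<lambda>y. ennreal (\<sigma> k) * (g y * emeasure M {\<omega>\<in>space M. y \<le> \<bar>X k \<omega>\<bar>})) = (\<lambda>y. g y * ennreal (\<sigma> k * P k y))"
      by (simp add: fun_eq_iff P_def emeasure_eq_measure ennreal_mult \<sigma>0 mult.commute mult.left_commute)
    finally show "(\<lambda>y. g y * ennreal (\<sigma> k * P k y)) \<in> borel_measurable lborel" .
  qed
  also have "\<dots> \<le> (\<integral>\<^sup>+y. ennreal (2 * s) * indicator {0..z} y \<partial>lborel)"
  proof (rule nn_integral_mono)
    fix y :: real
    have eq: "(\<Sum>k\<in>K. g y * ennreal (\<sigma> k * P k y)) = g y * ennreal (\<Sum>k\<in>K. \<sigma> k * P k y)"
      using \<sigma>0 P0 by (simp add: sum_distrib_left[symmetric] sum_ennreal)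
    show "(\<Sum>k\<in>K. g y * ennreal (\<sigma> k * P k y)) \<le> ennreal (2 * s) * indicator {0..z} y"
    proof (cases "0 < y \<and> y \<le> z")
      case True
      have "(\<Sum>k\<in>K. \<sigma> k * P k y) \<le> (\<Sum>k\<in>K. expectation (\<lambda>\<omega>. (X k \<omega>)\<^sup>2 * indicator {\<omega>. \<bar>X k \<omega>\<bar> \<ge> y} \<omega>))"
        using True by (intro sum_mono) (simp add: \<sigma>_def P_def B1[OF Xm i2])
      then have "y * (\<Sum>k\<in>K. \<sigma> k * P k y) \<le> y * (\<Sum>k\<in>K. expectation (\<lambda>\<omega>. (X k \<omega>)\<^sup>2 * indicator {\<omega>. \<bar>X k \<omega>\<bar> \<ge> y} \<omega>))"
        using True by (intro mult_left_mono) auto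
      then have "2 * y * (\<Sum>k\<in>K. \<sigma> k * P k y) \<le> 2 * s"
        using s[of y] True by linarith
      then have "ennreal (2 * y * (\<Sum>k\<in>K. \<sigma> k * P k y)) \<le> ennreal (2 * s)"
        by (rule ennreal_leI)
      moreover have "g y * ennreal (\<Sum>k\<in>K. \<sigma> k * P k y) = ennreal (2 * y * (\<Sum>k\<in>K. \<sigma> k * P k y))"
        using True by (simp add: g_def ennreal_mult[symmetric] sum_nonneg \<sigma>0 P0)
      ultimately show ?thesis using True eq by simp
    next
      case False
      then have "g y = 0" unfolding g_def by (auto simp: indicator_def)
      then show ?thesis using eq by simp
    qed
  qed
  also have "\<dots> = ennreal (2 * s * z)"
    using s0 z by (subst nn_integral_cmult_indicator) (auto simp: ennreal_mult)
  finally have "ennreal (\<Sum>k\<in>K. \<sigma> k * a k) \<le> ennreal (2 * s * z)" .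
  then have "(\<Sum>k\<in>K. \<sigma> k * a k) \<le> 2 * s * z" using s0 z by simp
  then show ?thesis unfolding \<sigma>_def a_def by (simp add: mult_ac)
qed



lemma alpha_ge:
  assumes z: "0 < z" "ereal z \<le> \<epsilon>"
    and c: "\<And>u. 0 < u \<Longrightarrow> ereal u < \<epsilon> \<Longrightarrow> u < 1 \<Longrightarrow> c \<le> (u - u ^ 3) powr (-(2/3))"
  shows "c \<le> alpha \<epsilon>"
  unfolding alpha_def
proof (rule cInf_greatest)
  define u0 where "u0 = min z 1 / 2"
  have "0 < u0" "u0 < 1" "u0 < z" using z unfolding u0_def by auto
  moreover have "ereal u0 < ereal z" using \<open>u0 < z\<close> by simp
  then have "ereal u0 < \<epsilon>" using z(2) by (rule less_le_trans)
  ultimately show "{(x - x ^ 3) powr (-(2/3)) | x::real. 0 < x \<and> ereal x < \<epsilon> \<and> x < 1} \<noteq> {}" by blast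
  fix y assume "y \<in> {(x - x ^ 3) powr (-(2/3)) | x::real. 0 < x \<and> ereal x < \<epsilon> \<and> x < 1}"
  then show "c \<le> y" using c by blast
qed

lemma elem_ge1:
  fixes u :: real assumes "0 < u" "u < 1"
  shows "1 \<le> (u - u ^ 3) powr (-(2/3))"
proof -
  have b0: "0 < u - u^3"
  proof -
    have "u^3 = u * u^2" by (simp add: power3_eq_cube power2_eq_square)
    moreover have "u^2 < 1" using assms by (simp add: power_less_one_iff abs_less_iff)
    ultimately show ?thesis using assms by (simp add: mult_less_cancel_left1)
  qed
  have "0 \<le> u^3" using assms by simp
  then have b1: "u - u^3 \<le> 1" using assms by linarith
  have "(u - u^3) powr (2/3) \<le> 1" using b0 b1 by (intro powr_le1) auto
  moreover have "0 < (u - u^3) powr (2/3)" using b0 by simp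
  ultimately show ?thesis by (simp add: powr_minus field_simps)
qed

lemma alpha_ge1: assumes "0 < z" "ereal z \<le> \<epsilon>" shows "1 \<le> alpha \<epsilon>"
  using assms by (intro alpha_ge elem_ge1)

lemma vbound:
  fixes v s :: real
  assumes z: "0 < z" "ereal z \<le> \<epsilon>" and s0: "0 \<le> s" and v: "0 < v"
    and hyp: "\<And>u. 0 < u \<Longrightarrow> u < 1 \<Longrightarrow> ereal u < \<epsilon> \<Longrightarrow> sqrt v * u * (v - (sqrt v * u)\<^sup>2) \<le> s"
  shows "v \<le> alpha \<epsilon> * s powr (2/3)"
proof -
  define m where "m = sqrt v"
  have m0: "0 < m" and mv: "m\<^sup>2 = v" using v unfolding m_def by auto
  have eq: "sqrt v * u * (v - (sqrt v * u)\<^sup>2) = m^3 * (u - u^3)" for u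
    using v by (simp add: m_def power3_eq_cube power2_eq_square right_diff_distrib)
  have bpos: "0 < u - u^3" if "0 < u" "u < 1" for u :: real
  proof -
    have "u^3 = u * u^2" by (simp add: power3_eq_cube power2_eq_square)
    moreover have "u^2 < 1" using that by (simp add: power_less_one_iff abs_less_iff)
    ultimately show ?thesis using that by (simp add: mult_less_cancel_left1)
  qed
  have spos: "0 < s"
  proof (rule ccontr)
    assume "\<not> 0 < s" then have s00: "s = 0" using s0 by simp
    define u0 where "u0 = min z 1 / 2"
    have u0: "0 < u0" "u0 < 1" "u0 < z" using z unfolding u0_def by auto
    have "ereal u0 < ereal z" using u0 by simp
    then have "ereal u0 < \<epsilon>" using z(2) by (rule less_le_trans)
    then have "m^3 * (u0 - u0^3) \<le> 0" using hyp[OF u0(1,2)] eq s00 by simp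
    moreover have "0 < m^3 * (u0 - u0^3)" using m0 bpos[OF u0(1,2)] by simp
    ultimately show False by simp
  qed
  have "v / s powr (2/3) \<le> alpha \<epsilon>"
  proof (rule alpha_ge[OF z])
    fix u :: real assume u: "0 < u" "ereal u < \<epsilon>" "u < 1"
    have b: "0 < u - u^3" using bpos u by simp
    have "m^3 * (u - u^3) \<le> s" using hyp[of u] u eq by simp
    then have m3: "m^3 \<le> s / (u - u^3)" using b by (simp add: field_simps)
    have m3p: "m^3 = m powr 3" using powr_realpow[OF m0, of 3] by simp
    have m2p: "m^2 = m powr 2" using powr_realpow[OF m0, of 2] by simp
    have "(m^3) powr (2/3) = m powr (3 * (2/3))" unfolding m3p by (rule powr_powr)
    also have "\<dots> = v" using m2p mv by simp
    finally have "v = (m^3) powr (2/3)" by simp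
    also have "\<dots> \<le> (s / (u - u^3)) powr (2/3)"
      using m3 m0 by (intro powr_mono2) auto
    also have "\<dots> = s powr (2/3) * (u - u^3) powr (-(2/3))"
      unfolding powr_divide powr_minus by (simp only: divide_inverse)
    finally show "v / s powr (2/3) \<le> (u - u^3) powr (-(2/3))"
      using spos by (simp add: field_simps)
  qed
  then show ?thesis using spos by (simp add: field_simps)
qed



lemma (in prob_space) E1_le:
  fixes X :: "'a \<Rightarrow> real"
  assumes Xm[measurable]: "X \<in> borel_measurable M" and i2: "integrable M (\<lambda>\<omega>. (X \<omega>)\<^sup>2)"
    and y: "0 \<le> y"
  shows "expectation (\<lambda>\<omega>. (X \<omega>)\<^sup>2) - y\<^sup>2 \<le> expectation (\<lambda>\<omega>. (X \<omega>)\<^sup>2 * indicator {\<omega>. \<bar>X \<omega>\<bar> \<ge> y} \<omega>)"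
proof -
  have "expectation (\<lambda>\<omega>. (X \<omega>)\<^sup>2 * indicator {\<omega>. \<bar>X \<omega>\<bar> < y} \<omega>) \<le> expectation (\<lambda>\<omega>. y\<^sup>2)"
  proof (rule integral_mono)
    show "integrable M (\<lambda>\<omega>. (X \<omega>)\<^sup>2 * indicator {\<omega>. \<bar>X \<omega>\<bar> < y} \<omega>)"
      by (rule integrable_sq_ind[OF Xm i2]) simp
    show "integrable M (\<lambda>\<omega>. y\<^sup>2)" by simp
    fix \<omega> show "(X \<omega>)\<^sup>2 * indicator {\<omega>. \<bar>X \<omega>\<bar> < y} \<omega> \<le> y\<^sup>2"
      using y by (auto simp: indicator_def power2_le_iff_abs_le)
  qed
  then show ?thesis using sq_split[OF Xm i2, of y] by (simp add: prob_space)
qed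

lemma main5:
  fixes M :: "'a measure" and X :: "nat \<Rightarrow> 'a \<Rightarrow> real" and n :: nat
    and t z :: real and \<epsilon> :: ereal
  assumes ps: "prob_space M"
    and rv: "\<And>k. k \<in> {1..n} \<Longrightarrow> X k \<in> borel_measurable M"
    and int1: "\<And>k. k \<in> {1..n} \<Longrightarrow> integrable M (X k)"
    and int2: "\<And>k. k \<in> {1..n} \<Longrightarrow> integrable M (\<lambda>\<omega>. (X k \<omega>)\<^sup>2)"
    and mean0: "\<And>k. k \<in> {1..n} \<Longrightarrow> (\<integral>\<omega>. X k \<omega> \<partial>M) = 0"
    and norm: "(\<Sum>k=1..n. \<integral>\<omega>. (X k \<omega>)\<^sup>2 \<partial>M) = 1"
    and z_pos: "0 < z" and z_le: "ereal z \<le> \<epsilon>"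
    and \<sigma>2_def: "\<sigma>2 = (\<lambda>k. \<integral>\<omega>. (X k \<omega>)\<^sup>2 \<partial>M)"
    and \<sigma>2z_def: "\<sigma>2z = (\<lambda>k y. \<integral>\<omega>. (X k \<omega>)\<^sup>2 * indicator {\<omega>. \<bar>X k \<omega>\<bar> \<ge> y} \<omega> \<partial>M)"
    and L_def: "L = (\<lambda>y. \<Sum>k=1..n. \<sigma>2z k y)"
    and f_def: "f = (\<lambda>k s. char (distr M borel (X k)) s)"
    and S_def: "S = (SUP x\<in>{x. 0 < x \<and> ereal x \<le> \<epsilon>}. ereal (x * L x))"
    and S53_def: "S53 = (SUP x\<in>{x. 0 < x \<and> ereal x \<le> \<epsilon>}. ereal ((x * L x) powr (5/3)))"
  shows "ereal (\<Sum>k=1..n. (cmod (f k t - 1))\<^sup>2)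
         \<le> ereal (t ^ 4) * (ereal (z / 2) * S + ereal ((1/4) * (\<Sum>k=1..n. \<sigma>2 k * \<sigma>2z k z)))
     \<and> ereal (t ^ 4) * (ereal (z / 2) * S + ereal ((1/4) * (\<Sum>k=1..n. \<sigma>2 k * \<sigma>2z k z)))
         \<le> ereal (t ^ 4) * (ereal (z / 2) * S + ereal (alpha \<epsilon> / (4 * z)) * S53)"
proof -
  interpret prob_space M by (rule ps)
  define K where "K = {1..n}"
  define a where "a k = expectation (\<lambda>\<omega>. (X k \<omega>)\<^sup>2 * indicator {\<omega>. \<bar>X k \<omega>\<bar> < z} \<omega>)" for k
  define I where "I = {x. 0 < x \<and> ereal x \<le> \<epsilon>}"
  have finK: "finite K" unfolding K_def by simp
  have \<sigma>0: "0 \<le> \<sigma>2 k" for k unfolding \<sigma>2_def by simp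
  have \<sigma>z0: "0 \<le> \<sigma>2z k y" for k y unfolding \<sigma>2z_def by simp
  have L0: "0 \<le> L y" for y unfolding L_def by (intro sum_nonneg \<sigma>z0)
  have zI: "z \<in> I" unfolding I_def using z_pos z_le by simp
  have split: "\<sigma>2 k = a k + \<sigma>2z k z" if "k \<in> K" for k
    unfolding \<sigma>2_def \<sigma>2z_def a_def using sq_split[OF rv int2] that K_def by simp
  have charb: "cmod (f k t - 1) \<le> t\<^sup>2 / 2 * \<sigma>2 k" if "k \<in> K" for k
    unfolding f_def \<sigma>2_def using char_sq_bound[OF rv int1 int2 mean0] that K_def by simp
  have lhs: "(\<Sum>k\<in>K. (cmod (f k t - 1))\<^sup>2) \<le> t^4 / 4 * (\<Sum>k\<in>K. \<sigma>2 k * a k + \<sigma>2 k * \<sigma>2z k z)"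
  proof -
    have "(\<Sum>k\<in>K. (cmod (f k t - 1))\<^sup>2) \<le> (\<Sum>k\<in>K. (t\<^sup>2 / 2 * \<sigma>2 k)\<^sup>2)"
      using charb by (intro sum_mono power_mono) auto
    also have "\<dots> = (\<Sum>k\<in>K. t^4 / 4 * (\<sigma>2 k * a k + \<sigma>2 k * \<sigma>2z k z))"
    proof (intro sum.cong refl)
      fix k assume k: "k \<in> K"
      have "\<sigma>2 k * a k + \<sigma>2 k * \<sigma>2z k z = \<sigma>2 k * \<sigma>2 k"
        using split[OF k] by (simp add: distrib_left)
      then show "(t\<^sup>2 / 2 * \<sigma>2 k)\<^sup>2 = t^4 / 4 * (\<sigma>2 k * a k + \<sigma>2 k * \<sigma>2z k z)"
        by (simp add: power2_eq_square power4_eq_xxxx)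
    qed
    also have "\<dots> = t^4 / 4 * (\<Sum>k\<in>K. \<sigma>2 k * a k + \<sigma>2 k * \<sigma>2z k z)"
      by (simp add: sum_distrib_left)
    finally show ?thesis .
  qed
  have S0: "0 \<le> S"
  proof -
    have "ereal (z * L z) \<le> S" unfolding S_def using zI I_def by (intro SUP_upper) auto
    moreover have "0 \<le> z * L z" using z_pos L0 by simp
    ultimately show ?thesis by (meson order_trans ereal_less_eq(5))
  qed
  have part1: "ereal (\<Sum>k=1..n. (cmod (f k t - 1))\<^sup>2)
         \<le> ereal (t ^ 4) * (ereal (z / 2) * S + ereal ((1/4) * (\<Sum>k=1..n. \<sigma>2 k * \<sigma>2z k z)))"
  proof (cases "S = \<infinity>")
    case True
    show ?thesis
    proof (cases "t = 0")
      case True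
      have "(\<Sum>k\<in>K. (cmod (f k t - 1))\<^sup>2) \<le> 0" using lhs True by simp
      then show ?thesis using True by (simp add: K_def zero_ereal_def[symmetric])
    next
      case False
      then have "0 < t^4" by simp
      then show ?thesis using \<open>S = \<infinity>\<close> z_pos by simp
    qed
  next
    case False
    then obtain s where Ss: "S = ereal s" using S0 by (cases S) auto
    have s0: "0 \<le> s" using S0 Ss by simp
    have hyp: "y * (\<Sum>k\<in>K. expectation (\<lambda>\<omega>. (X k \<omega>)\<^sup>2 * indicator {\<omega>. \<bar>X k \<omega>\<bar> \<ge> y} \<omega>)) \<le> s"
      if y: "0 < y" "y \<le> z" for y
    proof -
      have "ereal y \<le> ereal z" using y by simp
      then have "ereal y \<le> \<epsilon>" using z_le by (rule order_trans)
      then have "y \<in> I" unfolding I_def using y by auto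
      then have "ereal (y * L y) \<le> S" unfolding S_def I_def by (intro SUP_upper) auto
      then show ?thesis unfolding Ss L_def \<sigma>2z_def K_def by simp
    qed
    have sb: "(\<Sum>k\<in>K. \<sigma>2 k * a k) \<le> 2 * z * s"
      using sum_bound[OF finK _ _ z_pos hyp] rv int2 unfolding \<sigma>2_def a_def K_def by auto
    have "(\<Sum>k\<in>K. (cmod (f k t - 1))\<^sup>2) \<le> t^4 / 4 * ((\<Sum>k\<in>K. \<sigma>2 k * a k) + (\<Sum>k\<in>K. \<sigma>2 k * \<sigma>2z k z))"
      using lhs by (simp add: sum.distrib)
    also have "\<dots> \<le> t^4 / 4 * (2 * z * s + (\<Sum>k\<in>K. \<sigma>2 k * \<sigma>2z k z))"
      using sb by (intro mult_left_mono add_right_mono) auto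
    also have "\<dots> = t^4 * (z / 2 * s + 1/4 * (\<Sum>k\<in>K. \<sigma>2 k * \<sigma>2z k z))"
      by (simp add: algebra_simps)
    finally show ?thesis unfolding Ss K_def by simp
  qed
  have part2: "ereal ((1/4) * (\<Sum>k=1..n. \<sigma>2 k * \<sigma>2z k z)) \<le> ereal (alpha \<epsilon> / (4 * z)) * S53"
  proof -
    have al: "1 \<le> alpha \<epsilon>" by (rule alpha_ge1[OF z_pos z_le])
    have S530: "0 \<le> S53"
    proof -
      have "ereal ((z * L z) powr (5/3)) \<le> S53" unfolding S53_def using zI I_def by (intro SUP_upper) auto
      then show ?thesis by (meson order_trans ereal_less_eq(5) powr_ge_zero)
    qed
    show ?thesis
    proof (cases "S53 = \<infinity>")
      case True
      then show ?thesis using al z_pos by simp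
    next
      case False
      then obtain w where Sw: "S53 = ereal w" using S530 by (cases S53) auto
      have w0: "0 \<le> w" using S530 Sw by simp
      define s where "s = w powr (3/5)"
      have s0: "0 \<le> s" unfolding s_def by simp
      have xs: "x * L x \<le> s" if "x \<in> I" for x
      proof -
        have "ereal ((x * L x) powr (5/3)) \<le> S53" unfolding S53_def using that I_def by (intro SUP_upper) auto
        then have le: "(x * L x) powr (5/3) \<le> w" using Sw by simp
        have x0: "0 \<le> x * L x" using that L0 unfolding I_def by simp
        have "x * L x = ((x * L x) powr (5/3)) powr (3/5)"
          using x0 by (simp add: powr_powr powr_one)
        also have "\<dots> \<le> s" unfolding s_def using le by (intro powr_mono2) auto
        finally show ?thesis .
      qed
      have sw: "s powr (2/3) * s = w"
      proof -
        have "s powr (2/3) * s = s powr (2/3) * s powr 1" using s0 by (simp add: powr_one)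
        also have "\<dots> = s powr (2/3 + 1)" by (rule powr_add[symmetric])
        also have "\<dots> = s powr (5/3)" by simp
        also have "\<dots> = w" unfolding s_def using w0 by (simp add: powr_powr powr_one)
        finally show ?thesis .
      qed
      have Lz: "L z \<le> s / z" using xs[OF zI] z_pos by (simp add: field_simps)
      have n1: "K \<noteq> {}"
      proof
        assume "K = {}" then show False using norm unfolding K_def by simp
      qed
      define v where "v = Max (\<sigma>2 ` K)"
      have vK: "v \<in> \<sigma>2 ` K" unfolding v_def using finK n1 by (intro Max_in) auto
      then obtain j where j: "j \<in> K" "\<sigma>2 j = v" by auto
      have vmax: "\<sigma>2 k \<le> v" if "k \<in> K" for k unfolding v_def using finK that by (intro Max_ge) auto
      have v0: "0 \<le> v" using j \<sigma>0 by metis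
      have v1: "v \<le> 1"
      proof -
        have "\<sigma>2 j \<le> (\<Sum>k\<in>K. \<sigma>2 k)" using finK j(1) \<sigma>0 by (intro member_le_sum) auto
        also have "\<dots> = 1" using norm unfolding K_def \<sigma>2_def by simp
        finally show ?thesis using j by simp
      qed
      have sum_le: "(\<Sum>k\<in>K. \<sigma>2 k * \<sigma>2z k z) \<le> v * L z"
      proof -
        have "(\<Sum>k\<in>K. \<sigma>2 k * \<sigma>2z k z) \<le> (\<Sum>k\<in>K. v * \<sigma>2z k z)"
          using vmax \<sigma>z0 by (intro sum_mono mult_right_mono) auto
        also have "\<dots> = v * L z" unfolding L_def K_def by (simp add: sum_distrib_left)
        finally show ?thesis .
      qed
      have vb: "v \<le> alpha \<epsilon> * s powr (2/3)"
      proof (cases "v = 0")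
        case True then show ?thesis using al s0 by simp
      next
        case False
        then have vpos: "0 < v" using v0 by simp
        show ?thesis
        proof (rule vbound[OF z_pos z_le s0 vpos])
          fix u :: real assume u: "0 < u" "u < 1" "ereal u < \<epsilon>"
          define x where "x = sqrt v * u"
          have sv1: "sqrt v \<le> 1" using v1 by simp
          have x0: "0 < x" unfolding x_def using vpos u by simp
          have xu: "x \<le> u" unfolding x_def using sv1 u by (simp add: mult_left_le_one_le)
          have "ereal x \<le> ereal u" using xu by simp
          then have "ereal x \<le> \<epsilon>" using u(3) by (meson order_trans less_imp_le)
          then have xI: "x \<in> I" unfolding I_def using x0 by simp
          have "v - x\<^sup>2 \<le> \<sigma>2z j x"
            using E1_le[OF rv int2, of j x] j x0 unfolding \<sigma>2_def \<sigma>2z_def K_def by simp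
          also have "\<dots> \<le> L x" unfolding L_def using j \<sigma>z0 unfolding K_def
            by (intro member_le_sum) auto
          finally have "x * (v - x\<^sup>2) \<le> x * L x" using x0 by (intro mult_left_mono) auto
          also have "\<dots> \<le> s" by (rule xs[OF xI])
          finally show "sqrt v * u * (v - (sqrt v * u)\<^sup>2) \<le> s" unfolding x_def .
        qed
      qed
      have "(\<Sum>k\<in>K. \<sigma>2 k * \<sigma>2z k z) \<le> alpha \<epsilon> * s powr (2/3) * (s / z)"
      proof -
        have "v * L z \<le> alpha \<epsilon> * s powr (2/3) * L z" using vb L0 by (intro mult_right_mono) auto
        also have "\<dots> \<le> alpha \<epsilon> * s powr (2/3) * (s / z)" using Lz al by (intro mult_left_mono) auto
        finally show ?thesis using sum_le by simp
      qed
      also have "\<dots> = alpha \<epsilon> * w / z" using sw by (simp add: field_simps)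
      finally have fin: "(\<Sum>k\<in>K. \<sigma>2 k * \<sigma>2z k z) \<le> alpha \<epsilon> * w / z" .
      have "1/4 * (\<Sum>k\<in>K. \<sigma>2 k * \<sigma>2z k z) \<le> alpha \<epsilon> / (4 * z) * w"
        using fin by (simp add: field_simps)
      then show ?thesis unfolding Sw K_def by simp
    qed
  qed
  have "ereal (z / 2) * S + ereal ((1/4) * (\<Sum>k=1..n. \<sigma>2 k * \<sigma>2z k z))
     \<le> ereal (z / 2) * S + ereal (alpha \<epsilon> / (4 * z)) * S53"
    using part2 by (rule add_left_mono)
  then have "ereal (t ^ 4) * (ereal (z / 2) * S + ereal ((1/4) * (\<Sum>k=1..n. \<sigma>2 k * \<sigma>2z k z)))
         \<le> ereal (t ^ 4) * (ereal (z / 2) * S + ereal (alpha \<epsilon> / (4 * z)) * S53)"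
    by (rule ereal_mult_left_mono) simp
  with part1 show ?thesis by blast
qed


theorem lemma5:
  fixes M :: "'a measure" and X :: "nat \<Rightarrow> 'a \<Rightarrow> real" and n :: nat
    and t z :: real and \<epsilon> :: ereal
  assumes "prob_space M"
    and rv: "\<And>k. k \<in> {1..n} \<Longrightarrow> X k \<in> borel_measurable M"
    and indep: "prob_space.indep_vars M (\<lambda>_. borel) X {1..n}"
    and int1: "\<And>k. k \<in> {1..n} \<Longrightarrow> integrable M (X k)"
    and int2: "\<And>k. k \<in> {1..n} \<Longrightarrow> integrable M (\<lambda>\<omega>. (X k \<omega>)\<^sup>2)"
    and mean0: "\<And>k. k \<in> {1..n} \<Longrightarrow> (\<integral>\<omega>. X k \<omega> \<partial>M) = 0"
    and norm: "(\<Sum>k=1..n. \<integral>\<omega>. (X k \<omega>)\<^sup>2 \<partial>M) = 1"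
    and z_pos: "0 < z" and z_le: "ereal z \<le> \<epsilon>"
  shows
   "let \<sigma>2 = (\<lambda>k. \<integral>\<omega>. (X k \<omega>)\<^sup>2 \<partial>M);
        \<sigma>2z = (\<lambda>k y. \<integral>\<omega>. (X k \<omega>)\<^sup>2 * indicator {\<omega>. \<bar>X k \<omega>\<bar> \<ge> y} \<omega> \<partial>M);
        L = (\<lambda>y. \<Sum>k=1..n. \<sigma>2z k y);
        f = (\<lambda>k s. char (distr M borel (X k)) s);
        S = (SUP x\<in>{x. 0 < x \<and> ereal x \<le> \<epsilon>}. ereal (x * L x));
        S53 = (SUP x\<in>{x. 0 < x \<and> ereal x \<le> \<epsilon>}. ereal ((x * L x) powr (5/3)))
    in ereal (\<Sum>k=1..n. (cmod (f k t - 1))\<^sup>2)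
         \<le> ereal (t ^ 4) * (ereal (z / 2) * S + ereal ((1/4) * (\<Sum>k=1..n. \<sigma>2 k * \<sigma>2z k z)))
     \<and> ereal (t ^ 4) * (ereal (z / 2) * S + ereal ((1/4) * (\<Sum>k=1..n. \<sigma>2 k * \<sigma>2z k z)))
         \<le> ereal (t ^ 4) * (ereal (z / 2) * S + ereal (alpha \<epsilon> / (4 * z)) * S53)"
    unfolding Let_def by (rule main5[OF assms(1,2,4,5,6,7,8,9) refl refl refl refl refl refl])

end
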